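(* Let $V$ be a finite set of variables and let $D_{\mathit{dag}}$ be the ABA framework defined in the context. For each semantics $\sigma\in\{\text{complete},\text{preferred},\text{stable}\}$, $$\{(V,\{(x,y)\mid \mathit{arr}_{xy}\in S\})\mid S\in\sigma(D_{\mathit{dag}})\}=\{G\mid G \text{ is a directed acyclic graph with node set } V\}.$$
   Context: Assumption-based argumentation (ABA). An ABA framework (ABAF) is a tuple $D=(\mathcal L,\mathcal R,\mathcal A,\overline{\cdot})$ where $\mathcal L$ is a set of sentences, $\mathcal R$ is a set of rules $a_0\leftarrow a_1,\dots,a_n$ ($n\ge 0$, $a_i\in\mathcal L$; head $a_0$, body $\{a_1,\dots,a_n\}$), $\mathcal A\subseteq\mathcal L$ is a set of assumptions and $\overline{\cdot}:\mathcal A\to\mathcal L$ is the contrary function. For $S\subseteq\mathcal A$ and $q\in\mathcal L$, $S\vdash q$ if there is a finite rooted labelled tree whose root is labelled $q$, whose set of leaf labels is $S$ or $S\cup\{\top\}$, and in which every inner node is labelled $\mathrm{head}(r)$ for some $r\in\mathcal R$ and has exactly $|\mathrm{body}(r)|$ children labelled by the distinct elements of $\mathrm{body}(r)$ (or a single child $\top$ if the body is empty). $S$ attacks $T\subseteq\mathcal A$ if there are $S'\subseteq S$ and $a\in T$ with $S'\vdash\overline a$. $S$ is conflict-free if it does not attack itself; $S$ defends $T$ if $S$ attacks every set of assumptions that attacks $T$; $S$ is admissible if it is conflict-free and defends itself; complete if admissible and it contains every assumption set it defends; preferred if it is $\subseteq$-maximal among complete sets; stable if it is admissible and attacks $\{a\}$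 for every $a\in\mathcal A\setminus S$. $\sigma(D)$ denotes the set of $\sigma$-extensions. The framework $D_{\mathit{dag}}$. Let $V$ be a finite set of variables. Let $\mathcal A_{\mathit{arr}}=\{\mathit{arr}_{xy}\mid x,y\in V,x\ne y\}$ (the assumption $\mathit{arr}_{xy}$ stands for the arrow $(x,y)$), and for each unordered pair $\{x,y\}$ of distinct variables let $\mathit{noe}_{xy}=\mathit{noe}_{yx}$ be a single assumption ("no edge between $x$ and $y$"). $D_{\mathit{dag}}$ has assumptions $\mathcal A_{\mathit{dag}}=\mathcal A_{\mathit{arr}}\cup\{\mathit{noe}_{xy}\}$, each assumption $a$ has its own distinct contrary $\overline a$ (a fresh sentence), and the rules are: (i) $\overline a\leftarrow b$ for all distinct $a,b\in\{\mathit{arr}_{xy},\mathit{arr}_{yx},\mathit{noe}_{xy}\}$, for all distinct $x,y\in V$; (ii) for each sequence $x_1\dots x_k$ of variables with consecutive elements distinct and $x_1=x_k$, and each $1\le i<k$, the rule $\overline{\mathit{arr}_{x_ix_{i+1}}}\leftarrow \mathit{arr}_{x_1x_2},\dots,\mathit{arr}_{x_{k-1}x_k}$. *)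

theory Defs
  imports Main
begin

type_synonym 's rule = "'s \<times> 's set"

text \<open>derives R A S q: there is a finite rooted labelled tree with root q whose set of
leaf labels is S or S together with the top symbol; the top leaf (for empty bodies)
is not recorded in S.\<close>
inductive derives :: "'s rule set \<Rightarrow> 's set \<Rightarrow> 's set \<Rightarrow> 's \<Rightarrow> bool"
  for R :: "'s rule set" and A :: "'s set" where
  leaf: "a \<in> A \<Longrightarrow> derives R A {a} a"
| node: "(h, B) \<in> R \<Longrightarrow> finite B \<Longrightarrow> (\<forall>b\<in>B. derives R A (Sb b) b)
          \<Longrightarrow> derives R A (\<Union>b\<in>B. Sb b) h"

definition attacks :: "'s rule set \<Rightarrow> 's set \<Rightarrow> ('s \<Rightarrow> 's) \<Rightarrow> 's set \<Rightarrow> 's set \<Rightarrow> bool" where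
  "attacks R A ctr S T \<longleftrightarrow> (\<exists>S'\<subseteq>S. \<exists>a\<in>T. derives R A S' (ctr a))"

definition conflict_free :: "'s rule set \<Rightarrow> 's set \<Rightarrow> ('s \<Rightarrow> 's) \<Rightarrow> 's set \<Rightarrow> bool" where
  "conflict_free R A ctr S \<longleftrightarrow> \<not> attacks R A ctr S S"

definition defends :: "'s rule set \<Rightarrow> 's set \<Rightarrow> ('s \<Rightarrow> 's) \<Rightarrow> 's set \<Rightarrow> 's set \<Rightarrow> bool" where
  "defends R A ctr S T \<longleftrightarrow> (\<forall>U. U \<subseteq> A \<longrightarrow> attacks R A ctr U T \<longrightarrow> attacks R A ctr S U)"

definition admissible :: "'s rule set \<Rightarrow> 's set \<Rightarrow> ('s \<Rightarrow> 's) \<Rightarrow> 's set \<Rightarrow> bool" where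
  "admissible R A ctr S \<longleftrightarrow> S \<subseteq> A \<and> conflict_free R A ctr S \<and> defends R A ctr S S"

definition complete_ext :: "'s rule set \<Rightarrow> 's set \<Rightarrow> ('s \<Rightarrow> 's) \<Rightarrow> 's set \<Rightarrow> bool" where
  "complete_ext R A ctr S \<longleftrightarrow> admissible R A ctr S \<and>
     (\<forall>T. T \<subseteq> A \<longrightarrow> defends R A ctr S T \<longrightarrow> T \<subseteq> S)"

definition preferred_ext :: "'s rule set \<Rightarrow> 's set \<Rightarrow> ('s \<Rightarrow> 's) \<Rightarrow> 's set \<Rightarrow> bool" where
  "preferred_ext R A ctr S \<longleftrightarrow> complete_ext R A ctr S \<and>
     (\<forall>T. complete_ext R A ctr T \<longrightarrow> S \<subseteq> T \<longrightarrow> T = S)"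

definition stable_ext :: "'s rule set \<Rightarrow> 's set \<Rightarrow> ('s \<Rightarrow> 's) \<Rightarrow> 's set \<Rightarrow> bool" where
  "stable_ext R A ctr S \<longleftrightarrow> admissible R A ctr S \<and>
     (\<forall>a\<in>A - S. attacks R A ctr S {a})"

datatype semantics = Complete | Preferred | Stable

fun sem_ext :: "semantics \<Rightarrow> 's rule set \<Rightarrow> 's set \<Rightarrow> ('s \<Rightarrow> 's) \<Rightarrow> 's set \<Rightarrow> bool" where
  "sem_ext Complete = complete_ext"
| "sem_ext Preferred = preferred_ext"
| "sem_ext Stable = stable_ext"

text \<open>Sentences: Arr x y is the assumption arr_xy, Noe {x,y} is the single assumption
noe_xy = noe_yx, Ctr a is the (fresh, distinct) contrary of a.\<close>
datatype 'v sent = Arr 'v 'v | Noe "'v set" | Ctr "'v sent"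

definition dag_asms :: "'v set \<Rightarrow> 'v sent set" where
  "dag_asms V = {Arr x y | x y. x \<in> V \<and> y \<in> V \<and> x \<noteq> y}
              \<union> {Noe {x, y} | x y. x \<in> V \<and> y \<in> V \<and> x \<noteq> y}"

definition dag_ctr :: "'v sent \<Rightarrow> 'v sent" where
  "dag_ctr a = Ctr a"

definition cycle_seq :: "'v set \<Rightarrow> 'v list \<Rightarrow> bool" where
  "cycle_seq V xs \<longleftrightarrow> xs \<noteq> [] \<and> set xs \<subseteq> V \<and> hd xs = last xs \<and>
     (\<forall>j. Suc j < length xs \<longrightarrow> xs ! j \<noteq> xs ! Suc j)"

definition dag_rules :: "'v set \<Rightarrow> 'v sent rule set" where
  "dag_rules V =
     {(Ctr a, {b}) | a b x y. x \<in> V \<and> y \<in> V \<and> x \<noteq> y \<and>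
         a \<in> {Arr x y, Arr y x, Noe {x, y}} \<and> b \<in> {Arr x y, Arr y x, Noe {x, y}} \<and> a \<noteq> b}
   \<union> {(Ctr (Arr (xs ! i) (xs ! Suc i)), {Arr (xs ! j) (xs ! Suc j) | j. Suc j < length xs})
        | xs i. cycle_seq V xs \<and> Suc i < length xs}"

definition is_dag :: "'v set \<times> ('v \<times> 'v) set \<Rightarrow> bool" where
  "is_dag G \<longleftrightarrow> snd G \<subseteq> fst G \<times> fst G \<and> acyclic (snd G)"

end

theory Submission
  imports Defs
begin

lemma rule_shape:
  assumes "(h, B) \<in> dag_rules V"
  shows "(\<exists>a. h = Ctr a) \<and> B \<noteq> {} \<and> finite B \<and> B \<subseteq> dag_asms V"
  using assms unfolding dag_rules_def
proof (elim UnE)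
  assume "(h, B) \<in> {(Ctr a, {b}) | a b x y. x \<in> V \<and> y \<in> V \<and> x \<noteq> y \<and>
         a \<in> {Arr x y, Arr y x, Noe {x, y}} \<and> b \<in> {Arr x y, Arr y x, Noe {x, y}} \<and> a \<noteq> b}"
  then obtain a b x y where "h = Ctr a" "B = {b}" "x \<in> V" "y \<in> V" "x \<noteq> y"
    "b \<in> {Arr x y, Arr y x, Noe {x, y}}" by blast
  then show ?thesis unfolding dag_asms_def by blast
next
  assume "(h, B) \<in> {(Ctr (Arr (xs ! i) (xs ! Suc i)), {Arr (xs ! j) (xs ! Suc j) | j. Suc j < length xs})
        | xs i. cycle_seq V xs \<and> Suc i < length xs}"
  then obtain xs i where h: "h = Ctr (Arr (xs ! i) (xs ! Suc i))"
    "B = {Arr (xs ! j) (xs ! Suc j) | j. Suc j < length xs}" "cycle_seq V xs" "Suc i < length xs"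
    by blast
  have "B = (\<lambda>j. Arr (xs ! j) (xs ! Suc j)) ` {j. Suc j < length xs}" using h(2) by blast
  moreover have "{j. Suc j < length xs} = {..<length xs - 1}" by auto
  ultimately have "finite B" by simp
  moreover have "B \<noteq> {}" using h(2,4) by blast
  moreover have "B \<subseteq> dag_asms V"
  proof
    fix c assume "c \<in> B"
    then obtain j where j: "c = Arr (xs ! j) (xs ! Suc j)" "Suc j < length xs" using h(2) by blast
    have "xs ! j \<in> V" "xs ! Suc j \<in> V" using h(3) j(2) unfolding cycle_seq_def
      by (meson Suc_lessD nth_mem subsetD)+
    moreover have "xs ! j \<noteq> xs ! Suc j" using h(3) j(2) unfolding cycle_seq_def by blast
    ultimately show "c \<in> dag_asms V" unfolding dag_asms_def j(1) by blast
  qed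
  ultimately show ?thesis using h(1) by blast
qed

lemma derives_asm:
  assumes "derives (dag_rules V) (dag_asms V) S b" "b \<in> dag_asms V"
  shows "S = {b}"
  using assms
proof cases
  case (node B Sb)
  then show ?thesis using rule_shape[OF node(2)] assms(2) by (auto simp: dag_asms_def)
qed auto

lemma derives_ctr:
  assumes "derives (dag_rules V) (dag_asms V) S (Ctr a)"
  shows "(Ctr a, S) \<in> dag_rules V"
  using assms
proof cases
  case leaf
  then show ?thesis by (auto simp: dag_asms_def)
next
  case (node B Sb)
  have "\<forall>b\<in>B. Sb b = {b}" using node rule_shape[OF node(2)] derives_asm by blast
  then have "S = B" using node(1) by auto
  then show ?thesis using node by simp
qed

lemma derives_rule:
  assumes "(h, B) \<in> R" "finite B" "B \<subseteq> A"
  shows "derives R A B h"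
proof -
  have "derives R A (\<Union>b\<in>B. {b}) h"
    by (rule derives.node[OF assms(1,2)]) (use assms(3) in \<open>auto intro: derives.leaf\<close>)
  then show ?thesis by simp
qed

lemma attacks_iff:
  "attacks (dag_rules V) (dag_asms V) dag_ctr U T \<longleftrightarrow>
     (\<exists>B\<subseteq>U. \<exists>a\<in>T. (Ctr a, B) \<in> dag_rules V)"
  unfolding attacks_def dag_ctr_def
  using derives_ctr derives_rule rule_shape by meson

lemma path_of_trancl:
  assumes "(x, y) \<in> E\<^sup>+"
  shows "\<exists>xs. length xs \<ge> 2 \<and> hd xs = x \<and> last xs = y \<and>
           (\<forall>j. Suc j < length xs \<longrightarrow> (xs ! j, xs ! Suc j) \<in> E)"
  using assms
proof (induction rule: trancl_induct)
  case (base y)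
  then show ?case by (intro exI[of _ "[x, y]"]) (auto simp: less_Suc_eq)
next
  case (step y z)
  then obtain xs where xs: "length xs \<ge> 2" "hd xs = x" "last xs = y"
    "\<forall>j. Suc j < length xs \<longrightarrow> (xs ! j, xs ! Suc j) \<in> E" by blast
  have "\<forall>j. Suc j < length (xs @ [z]) \<longrightarrow> ((xs @ [z]) ! j, (xs @ [z]) ! Suc j) \<in> E"
  proof (intro allI impI)
    fix j assume j: "Suc j < length (xs @ [z])"
    show "((xs @ [z]) ! j, (xs @ [z]) ! Suc j) \<in> E"
    proof (cases "Suc j < length xs")
      case True then show ?thesis using xs(4) by (simp add: nth_append)
    next
      case False
      then have "Suc j = length xs" using j by simp
      then have "xs ! j = y" using xs(1,3) by (metis diff_Suc_1 last_conv_nth list.size(3) not_numeral_le_zero)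
      then show ?thesis using \<open>Suc j = length xs\<close> step(2) by (simp add: nth_append)
    qed
  qed
  moreover have "xs \<noteq> []" using xs(1) by auto
  ultimately show ?case using xs by (intro exI[of _ "xs @ [z]"]) auto
qed

lemma trancl_of_path:
  assumes "\<forall>j. Suc j < length xs \<longrightarrow> (xs ! j, xs ! Suc j) \<in> E"
  shows "0 < k \<Longrightarrow> k < length xs \<Longrightarrow> (xs ! 0, xs ! k) \<in> E\<^sup>+"
proof (induction k)
  case 0 then show ?case by simp
next
  case (Suc k)
  show ?case
  proof (cases "k = 0")
    case True then show ?thesis using assms Suc by auto
  next
    case False
    then have "(xs ! 0, xs ! k) \<in> E\<^sup>+" using Suc by auto
    moreover have "(xs ! k, xs ! Suc k) \<in> E" using assms Suc by auto
    ultimately show ?thesis by simp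
  qed
qed

lemma good_ext:
  assumes sub: "S \<subseteq> dag_asms V"
    and cf: "conflict_free (dag_rules V) (dag_asms V) dag_ctr S"
    and sib: "\<forall>a\<in>dag_asms V - S. \<exists>b\<in>S. (Ctr a, {b}) \<in> dag_rules V"
  shows "sem_ext \<sigma> (dag_rules V) (dag_asms V) dag_ctr S"
proof -
  let ?R = "dag_rules V" and ?A = "dag_asms V"
  have att: "attacks ?R ?A dag_ctr S {a}" if aa: "a \<in> ?A - S" for a
  proof -
    obtain b where "b \<in> S" "(Ctr a, {b}) \<in> ?R" using sib aa by meson
    then show ?thesis unfolding attacks_iff by (intro exI[of _ "{b}"]) simp
  qed
  have adm: "admissible ?R ?A dag_ctr S"
    unfolding admissible_def defends_def
  proof (intro conjI sub cf allI impI)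
    fix U assume U: "U \<subseteq> ?A" "attacks ?R ?A dag_ctr U S"
    then obtain B a where B: "B \<subseteq> U" "a \<in> S" "(Ctr a, B) \<in> ?R" unfolding attacks_iff by blast
    have "\<not> B \<subseteq> S" using cf B unfolding conflict_free_def attacks_iff by blast
    then obtain b where "b \<in> B" "b \<notin> S" by blast
    then have "attacks ?R ?A dag_ctr S {b}" using att B U by blast
    then show "attacks ?R ?A dag_ctr S U" using \<open>b \<in> B\<close> B unfolding attacks_iff by blast
  qed
  have compl: "complete_ext ?R ?A dag_ctr S"
    unfolding complete_ext_def
  proof (intro conjI adm allI impI subsetI)
    fix T a assume T: "T \<subseteq> ?A" "defends ?R ?A dag_ctr S T" "a \<in> T"
    show "a \<in> S"
    proof (rule ccontr)
      assume "a \<notin> S"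
      then obtain b where b: "b \<in> S" "(Ctr a, {b}) \<in> ?R" using sib T by blast
      have "attacks ?R ?A dag_ctr {b} T" using b T unfolding attacks_iff by blast
      moreover have "{b} \<subseteq> ?A" using b sub by blast
      ultimately have "attacks ?R ?A dag_ctr S {b}" using T unfolding defends_def by blast
      then have "attacks ?R ?A dag_ctr S S" using b unfolding attacks_iff by blast
      then show False using cf unfolding conflict_free_def by blast
    qed
  qed
  have pref: "preferred_ext ?R ?A dag_ctr S"
    unfolding preferred_ext_def
  proof (intro conjI compl allI impI)
    fix T assume T: "complete_ext ?R ?A dag_ctr T" "S \<subseteq> T"
    have "T \<subseteq> S"
    proof
      fix a assume "a \<in> T"
      show "a \<in> S"
      proof (rule ccontr)
        assume "a \<notin> S"
        moreover have "a \<in> ?A" using T \<open>a \<in> T\<close> unfolding complete_ext_def admissible_def by blast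
        ultimately have "attacks ?R ?A dag_ctr S {a}" using att by blast
        then have "attacks ?R ?A dag_ctr T T" using T \<open>a \<in> T\<close> unfolding attacks_iff by blast
        then show False using T unfolding complete_ext_def admissible_def conflict_free_def by blast
      qed
    qed
    then show "T = S" using T by blast
  qed
  have stab: "stable_ext ?R ?A dag_ctr S"
    unfolding stable_ext_def using adm att by blast
  show ?thesis using compl pref stab by (cases \<sigma>) auto
qed

lemma ext_adm:
  "sem_ext \<sigma> R A ctr S \<Longrightarrow> admissible R A ctr S"
  by (cases \<sigma>) (auto simp: complete_ext_def preferred_ext_def stable_ext_def)

lemma ext_dag:
  assumes "sem_ext \<sigma> (dag_rules V) (dag_asms V) dag_ctr S"
  shows "is_dag (V, {(x, y). Arr x y \<in> S})"
proof -
  let ?R = "dag_rules V" and ?A = "dag_asms V" and ?E = "{(x, y). Arr x y \<in> S}"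
  have adm: "admissible ?R ?A dag_ctr S" using ext_adm assms by blast
  then have sub: "S \<subseteq> ?A" and cf: "\<not> attacks ?R ?A dag_ctr S S"
    unfolding admissible_def conflict_free_def by blast+
  have arr: "x \<in> V \<and> y \<in> V \<and> x \<noteq> y" if "Arr x y \<in> S" for x y
    using sub that unfolding dag_asms_def by blast
  have "acyclic ?E"
    unfolding acyclic_def
  proof (intro allI notI)
    fix x assume "(x, x) \<in> ?E\<^sup>+"
    from path_of_trancl[OF this] obtain xs where xs: "length xs \<ge> 2" "hd xs = x" "last xs = x"
      "\<forall>j. Suc j < length xs \<longrightarrow> (xs ! j, xs ! Suc j) \<in> ?E"
      by blast
    have ne: "xs \<noteq> []" using xs(1) by auto
    have "set xs \<subseteq> V"
    proof
      fix v assume "v \<in> set xs"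
      then obtain k where k: "k < length xs" "v = xs ! k" by (metis in_set_conv_nth)
      show "v \<in> V"
      proof (cases "Suc k < length xs")
        case True
        then have "(xs ! k, xs ! Suc k) \<in> ?E" using xs(4) by blast
        then show ?thesis using arr k by simp
      next
        case False
        then have "Suc (k - 1) < length xs" "Suc (k - 1) = k" using k xs(1) by auto
        then have "(xs ! (k - 1), xs ! k) \<in> ?E" using xs(4) by metis
        then show ?thesis using arr k by simp
      qed
    qed
    moreover have "\<forall>j. Suc j < length xs \<longrightarrow> xs ! j \<noteq> xs ! Suc j"
    proof (intro allI impI)
      fix j assume "Suc j < length xs"
      then have "Arr (xs ! j) (xs ! Suc j) \<in> S" using xs(4) by blast
      then show "xs ! j \<noteq> xs ! Suc j" using arr by blast
    qed
    ultimately have cyc: "cycle_seq V xs" unfolding cycle_seq_def using ne xs(2,3) by simp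
    let ?B = "{Arr (xs ! j) (xs ! Suc j) | j. Suc j < length xs}"
    have r: "(Ctr (Arr (xs ! 0) (xs ! Suc 0)), ?B) \<in> ?R"
    proof -
      have "Suc 0 < length xs" using xs(1) by simp
      then show ?thesis unfolding dag_rules_def
        by (intro UnI2 CollectI exI[of _ xs] exI[of _ 0] conjI refl cyc)
    qed
    have "?B \<subseteq> S" using xs(4) by auto
    moreover have "Arr (xs ! 0) (xs ! Suc 0) \<in> S" using xs(4) xs(1) by auto
    ultimately have "attacks ?R ?A dag_ctr S S" using r unfolding attacks_iff by blast
    then show False using cf by blast
  qed
  then show ?thesis unfolding is_dag_def using arr by auto
qed

lemma dag_ext:
  assumes "is_dag (V, E)"
  shows "\<exists>S. sem_ext \<sigma> (dag_rules V) (dag_asms V) dag_ctr S \<and> {(x, y). Arr x y \<in> S} = E"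
proof -
  let ?R = "dag_rules V" and ?A = "dag_asms V"
  have EV: "E \<subseteq> V \<times> V" and ac: "acyclic E" using assms unfolding is_dag_def by auto
  have irr: "(x, x) \<notin> E" for x using ac unfolding acyclic_def by blast
  have asym: "(y, x) \<notin> E" if "(x, y) \<in> E" for x y
    using ac that unfolding acyclic_def by (meson trancl.intros)
  define S where "S = {Arr x y | x y. (x, y) \<in> E} \<union>
      {Noe {x, y} | x y. x \<in> V \<and> y \<in> V \<and> x \<noteq> y \<and> (x, y) \<notin> E \<and> (y, x) \<notin> E}"
  have arrS: "Arr x y \<in> S \<longleftrightarrow> (x, y) \<in> E" for x y unfolding S_def by blast
  have noeS: "Noe {x, y} \<in> S \<longleftrightarrow> x \<in> V \<and> y \<in> V \<and> x \<noteq> y \<and> (x, y) \<notin> E \<and> (y, x) \<notin> E" for x y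
    unfolding S_def by (auto simp: doubleton_eq_iff)
  have sub: "S \<subseteq> ?A"
    unfolding S_def dag_asms_def using EV irr by blast
  have cf: "conflict_free ?R ?A dag_ctr S"
    unfolding conflict_free_def attacks_iff
  proof (intro notI, elim exE bexE conjE)
    fix B a assume B: "B \<subseteq> S" "a \<in> S" "(Ctr a, B) \<in> ?R"
    from B(3) show False unfolding dag_rules_def
    proof (elim UnE)
      assume "(Ctr a, B) \<in> {(Ctr a, {b}) | a b x y. x \<in> V \<and> y \<in> V \<and> x \<noteq> y \<and>
         a \<in> {Arr x y, Arr y x, Noe {x, y}} \<and> b \<in> {Arr x y, Arr y x, Noe {x, y}} \<and> a \<noteq> b}"
      then obtain b x y where "B = {b}" "a \<in> {Arr x y, Arr y x, Noe {x, y}}"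
        "b \<in> {Arr x y, Arr y x, Noe {x, y}}" "a \<noteq> b" by blast
      then show False using B(1,2) arrS noeS asym by (auto simp: insert_commute)
    next
      assume "(Ctr a, B) \<in> {(Ctr (Arr (xs ! i) (xs ! Suc i)), {Arr (xs ! j) (xs ! Suc j) | j. Suc j < length xs})
        | xs i. cycle_seq V xs \<and> Suc i < length xs}"
      then obtain xs i where h:
        "B = {Arr (xs ! j) (xs ! Suc j) | j. Suc j < length xs}" "cycle_seq V xs" "Suc i < length xs"
        by blast
      have path: "\<forall>j. Suc j < length xs \<longrightarrow> (xs ! j, xs ! Suc j) \<in> E"
        using B(1) h(1) arrS by blast
      have "(xs ! 0, xs ! (length xs - 1)) \<in> E\<^sup>+"
        using trancl_of_path[OF path, of "length xs - 1"] h(3) by auto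
      moreover have "xs ! 0 = xs ! (length xs - 1)"
        using h(2) unfolding cycle_seq_def by (metis hd_conv_nth last_conv_nth)
      ultimately show False using ac unfolding acyclic_def by metis
    qed
  qed
  have sib: "\<forall>a\<in>?A - S. \<exists>b\<in>S. (Ctr a, {b}) \<in> ?R"
  proof
    fix a assume a: "a \<in> ?A - S"
    then obtain x y where xy: "x \<in> V" "y \<in> V" "x \<noteq> y" "a = Arr x y \<or> a = Noe {x, y}"
      unfolding dag_asms_def by blast
    have tr: "(Ctr a, {b}) \<in> ?R" if "a \<in> {Arr x y, Arr y x, Noe {x, y}}"
      "b \<in> {Arr x y, Arr y x, Noe {x, y}}" "a \<noteq> b" for a b
      unfolding dag_rules_def using xy(1-3) that by (intro UnI1) blast
    show "\<exists>b\<in>S. (Ctr a, {b}) \<in> ?R"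
    proof (cases "(x, y) \<in> E")
      case True
      then have "a \<noteq> Arr x y" using a arrS by blast
      then show ?thesis using True arrS tr xy(4) by blast
    next
      case F1: False
      show ?thesis
      proof (cases "(y, x) \<in> E")
        case True
        then have "a \<noteq> Arr y x" using a arrS by blast
        moreover have "Arr y x \<noteq> Noe {x, y}" by simp
        ultimately show ?thesis using True arrS tr xy(4) by blast
      next
        case False
        then have "Noe {x, y} \<in> S" using F1 noeS xy by blast
        then have "a = Arr x y" using xy(4) a by blast
        then show ?thesis using tr \<open>Noe {x, y} \<in> S\<close> by blast
      qed
    qed
  qed
  show ?thesis using good_ext[OF sub cf sib] arrS by blast
qed

theorem proposition1:
  fixes V :: "'v set" and \<sigma> :: semantics
  assumes "finite V"
  shows "{(V, {(x, y). Arr x y \<in> S}) | S. sem_ext \<sigma> (dag_rules V) (dag_asms V) dag_ctr S}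
         = {G. is_dag G \<and> fst G = V}"
proof (intro equalityI subsetI)
  fix G assume "G \<in> {(V, {(x, y). Arr x y \<in> S}) | S. sem_ext \<sigma> (dag_rules V) (dag_asms V) dag_ctr S}"
  then show "G \<in> {G. is_dag G \<and> fst G = V}" using ext_dag by auto
next
  fix G assume "G \<in> {G. is_dag G \<and> fst G = V}"
  then obtain E where G: "G = (V, E)" "is_dag (V, E)" by (cases G) auto
  then show "G \<in> {(V, {(x, y). Arr x y \<in> S}) | S. sem_ext \<sigma> (dag_rules V) (dag_asms V) dag_ctr S}"
    using dag_ext[OF G(2), of \<sigma>] by auto
qed

end
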